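(* Let $A$ and $B$ be two distinct points of the Euclidean plane and let $C$ be a further point. Let $c$ be the union of the ellipse and the hyperbola, both defined with foci $A$, $B$ and circumpoint $C$, i.e. $c=\{P : AP+PB=AC+CB\}\cup\{P : |AP-PB|=|AC-CB|\}$. Let $a$ denote the line $AB$ and let $b$ be the perpendicular bisector of the segment $AB$. Let $C'$ be the reflection of $C$ in the line $a$ and $C''$ the reflection of $C$ in the line $b$. Let $D$ be an arbitrary point of $c$, and let $D'$ and $D''$ be the reflections of $D$ in $a$ and in $b$, respectively. Then the intersection point of the lines $CD$ and $C''D''$, the intersection point of the lines $CD'$ and $C'C''$, and the intersection point of the lines $C'D$ and $D'D''$ are collinear.
   Context: $XY$ denotes the Euclidean distance between points $X$ and $Y$. The ellipse with foci $A,B$ and circumpoint $C$ is the set of points $P$ with $AP+PB=AC+CB$; the hyperbola with foci $A,B$ and circumpoint $C$ is the set of points $P$ with $|AP-PB|=|AC-CB|$. *)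

theory Defs
  imports "HOL-Analysis.Analysis"
begin

definition line_thru :: "real^2 \<Rightarrow> real^2 \<Rightarrow> (real^2) set" where
  "line_thru P Q = affine hull {P, Q}"

definition rot90 :: "real^2 \<Rightarrow> real^2" where
  "rot90 u = vector [- (u$2), u$1]"

text \<open>Reflection of X in the line through P with nonzero direction v.\<close>
definition reflect_line :: "real^2 \<Rightarrow> real^2 \<Rightarrow> real^2 \<Rightarrow> real^2" where
  "reflect_line P v X = 2 *\<^sub>R (P + (((X - P) \<bullet> v) / (v \<bullet> v)) *\<^sub>R v) - X"

definition reflect_a :: "real^2 \<Rightarrow> real^2 \<Rightarrow> real^2 \<Rightarrow> real^2" where
  "reflect_a A B X = reflect_line A (B - A) X"

definition reflect_b :: "real^2 \<Rightarrow> real^2 \<Rightarrow> real^2 \<Rightarrow> real^2" where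
  "reflect_b A B X = reflect_line (midpoint A B) (rot90 (B - A)) X"

definition conic_union :: "real^2 \<Rightarrow> real^2 \<Rightarrow> real^2 \<Rightarrow> (real^2) set" where
  "conic_union A B C =
     {P. dist A P + dist P B = dist A C + dist C B}
     \<union> {P. \<bar>dist A P - dist P B\<bar> = \<bar>dist A C - dist C B\<bar>}"

text \<open>X is "the intersection point" of lines PQ and RS: both lines are well defined,
  they are different lines, and X lies on both (hence X is their unique common point).\<close>
definition is_intersection :: "real^2 \<Rightarrow> real^2 \<Rightarrow> real^2 \<Rightarrow> real^2 \<Rightarrow> real^2 \<Rightarrow> bool" where
  "is_intersection X P Q R S \<longleftrightarrow>
     P \<noteq> Q \<and> R \<noteq> S \<and> line_thru P Q \<noteq> line_thru R S \<and>
     X \<in> line_thru P Q \<and> X \<in> line_thru R S"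

end

theory Submission
  imports Defs
begin

lemma solve2:
  fixes a1 b1 e1 a2 b2 e2 x y :: real
  assumes "a1*x + b1*y = e1" "a2*x + b2*y = e2" "a1*b2 - a2*b1 \<noteq> 0"
  shows "x = (e1*b2 - e2*b1)/(a1*b2 - a2*b1)" "y = (a1*e2 - a2*e1)/(a1*b2 - a2*b1)"
proof -
  have "x*(a1*b2 - a2*b1) = e1*b2 - e2*b1" using assms(1,2)[symmetric] by (simp add: algebra_simps)
  then show "x = (e1*b2 - e2*b1)/(a1*b2 - a2*b1)" using assms(3) by (simp add: field_simps)
  have "y*(a1*b2 - a2*b1) = a1*e2 - a2*e1" using assms(1,2)[symmetric] by (simp add: algebra_simps)
  then show "y = (a1*e2 - a2*e1)/(a1*b2 - a2*b1)" using assms(3) by (simp add: field_simps)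
qed

lemma core:
  fixes p q r s x1 x2 y1 y2 z1 z2 :: real
  assumes hX0: "(r-p) * (s-q) - (s-q) * (-r+p) \<noteq> 0"
  and hX1: "(x1-p) * (s-q) - (x2-q) * (r-p) = 0"
  and hX2: "(x1+p) * (s-q) - (x2-q) * (-r+p) = 0"
  and hY0: "(r-p) * (q+q) - (-s-q) * (-p-p) \<noteq> 0"
  and hY1: "(y1-p) * (-s-q) - (y2-q) * (r-p) = 0"
  and hY2: "(y1-p) * (q+q) - (y2+q) * (-p-p) = 0"
  and hZ0: "(r-p) * (s+s) - (s+q) * (-r-r) \<noteq> 0"
  and hZ1: "(z1-p) * (s+q) - (z2+q) * (r-p) = 0"
  and hZ2: "(z1-r) * (s+s) - (z2+s) * (-r-r) = 0"
  shows "(x1-y1) * (z2-y2) - (x2-y2) * (z1-y1) = 0"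
proof -
  have sq: "s - q \<noteq> 0" "r - p \<noteq> 0" using hX0 by auto
  have "2 * x1 * (s-q) = 0" using hX1 hX2 by algebra
  hence ex1: "x1 = 0" using sq by simp
  have ex2: "x2 * (r-p) = q * r - p * s" using hX1 unfolding ex1 by algebra
  have ey1: "y1 * (p * s+2 * p * q-q * r) = p * (p * s+q * r)" using hY1 hY2 by algebra
  have ey2: "y2 * (p * s+2 * p * q-q * r) = -q * (p * s+q * r)" using hY1 hY2 by algebra
  have ez1: "z1 * (r * q+2 * r * s-s * p) = r * (r * q+s * p)" using hZ1 hZ2 by algebra
  have ez2: "z2 * (r * q+2 * r * s-s * p) = -s * (r * q+s * p)" using hZ1 hZ2 by algebra
  have dY: "p * s+2 * p * q-q * r \<noteq> 0" using hY0 by (simp add: algebra_simps)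
  have dZ: "r * q+2 * r * s-s * p \<noteq> 0" using hZ0 by (simp add: algebra_simps)
  define t where "t = (p * s + q * r)/(p * s+2 * p * q-q * r)"
  define w where "w = (r * q + s * p)/(r * q+2 * r * s-s * p)"
  have y: "y1 = p * t" "y2 = - q * t" using ey1 ey2 dY unfolding t_def by (simp_all add: field_simps)
  have z: "z1 = r * w" "z2 = - s * w" using ez1 ez2 dZ unfolding w_def by (simp_all add: field_simps)
  have key: "t * w * (r-p) + r * w - p * t = 0"
  proof -
    have "(t * w * (r-p) + r * w - p * t) * ((p * s+2 * p * q-q * r) * (r * q+2 * r * s-s * p)) = 0"
    proof -
      have ht: "t * (p * s+2 * p * q-q * r) = p * s + q * r" unfolding t_def using dY by simp
      have hw: "w * (r * q+2 * r * s-s * p) = r * q + s * p" unfolding w_def using dZ by simp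
      show ?thesis using ht hw by algebra
    qed
    thus ?thesis using dY dZ by simp
  qed
  have "(r-p) * ((x1-y1) * (z2-y2) - (x2-y2) * (z1-y1)) = 0"
    unfolding y z ex1 using ex2 key by algebra
  thus ?thesis using sq by simp
qed

definition crs :: "real^2 \<Rightarrow> real^2 \<Rightarrow> real" where
  "crs u w = u$1 * w$2 - u$2 * w$1"

lemma inner2: "(x::real^2) \<bullet> y = x$1 * y$1 + x$2 * y$2"
  by (simp add: inner_vec_def sum_2)

lemma vec2_eq: "(x::real^2) = y \<longleftrightarrow> x$1 = y$1 \<and> x$2 = y$2"
  by (simp add: vec_eq_iff forall_2)

lemma par:
  fixes u w :: "real^2"
  assumes "u \<noteq> 0" "crs w u = 0"
  shows "w = ((w \<bullet> u)/(u \<bullet> u)) *\<^sub>R u"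
proof -
  have uu: "u$1 * u$1 + u$2 * u$2 \<noteq> 0"
  proof
    assume "u$1 * u$1 + u$2 * u$2 = 0"
    hence "u$1 = 0" "u$2 = 0" using sum_squares_eq_zero_iff by blast+
    thus False using assms(1) by (simp add: vec2_eq)
  qed
  have c: "w$1 * u$2 = w$2 * u$1" using assms(2) unfolding crs_def by simp
  have "w$1 * (u$1 * u$1 + u$2 * u$2) = (w$1 * u$1 + w$2 * u$2) * u$1"
    using c by (simp add: algebra_simps)
  moreover have "w$2 * (u$1 * u$1 + u$2 * u$2) = (w$1 * u$1 + w$2 * u$2) * u$2"
    using c by (simp add: algebra_simps)
  ultimately show ?thesis using uu unfolding vec2_eq inner2
    by (simp add: field_simps)
qed

lemma line_char:
  assumes "P \<noteq> Q"
  shows "line_thru P Q = {X. crs (X - P) (Q - P) = 0}"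
proof
  show "line_thru P Q \<subseteq> {X. crs (X - P) (Q - P) = 0}"
  proof
    fix X assume "X \<in> line_thru P Q"
    then obtain u v where uv: "X = u *\<^sub>R P + v *\<^sub>R Q" "u + v = 1"
      unfolding line_thru_def affine_hull_2 by auto
    have "u = 1 - v" using uv(2) by simp
    hence "X - P = v *\<^sub>R (Q - P)" using uv(1) by (simp add: scaleR_diff_left scaleR_diff_right)
    hence "crs (X - P) (Q - P) = crs (v *\<^sub>R (Q - P)) (Q - P)" by simp
    also have "\<dots> = 0" by (simp add: crs_def)
    finally show "X \<in> {X. crs (X - P) (Q - P) = 0}" by simp
  qed
next
  show "{X. crs (X - P) (Q - P) = 0} \<subseteq> line_thru P Q"
  proof
    fix X assume "X \<in> {X. crs (X - P) (Q - P) = 0}"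
    hence "crs (X - P) (Q - P) = 0" by simp
    then obtain k where "X - P = k *\<^sub>R (Q - P)" using par[of "Q - P" "X - P"] assms by auto
    hence "X = P + k *\<^sub>R (Q - P)" by (metis add.commute diff_add_cancel)
    moreover have "(1 - k) *\<^sub>R P + k *\<^sub>R Q = P + k *\<^sub>R (Q - P)"
      by (simp add: scaleR_diff_left scaleR_diff_right algebra_simps)
    ultimately have "X = (1 - k) *\<^sub>R P + k *\<^sub>R Q" by simp
    thus "X \<in> line_thru P Q" unfolding line_thru_def affine_hull_2
      by (intro CollectI exI[of _ "1 - k"] exI[of _ k]) simp
  qed
qed

lemma crs_scale: "crs u (k *\<^sub>R w) = k * crs u w"
  by (simp add: crs_def algebra_simps)

lemma crs_sub: "crs (a - b) w = crs a w - crs b w"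
  by (simp add: crs_def algebra_simps)

lemma inter:
  assumes "is_intersection X P Q R S"
  shows "crs (Q - P) (S - R) \<noteq> 0" "crs (X - P) (Q - P) = 0" "crs (X - R) (S - R) = 0"
proof -
  have PQ: "P \<noteq> Q" and RS: "R \<noteq> S" and ne: "line_thru P Q \<noteq> line_thru R S"
    and x1: "X \<in> line_thru P Q" and x2: "X \<in> line_thru R S"
    using assms unfolding is_intersection_def by auto
  show h1: "crs (X - P) (Q - P) = 0" using x1 line_char[OF PQ] by auto
  show h2: "crs (X - R) (S - R) = 0" using x2 line_char[OF RS] by auto
  show "crs (Q - P) (S - R) \<noteq> 0"
  proof
    assume c0: "crs (Q - P) (S - R) = 0"
    have "crs (S - R) (Q - P) = 0" using c0 by (simp add: crs_def algebra_simps)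
    then obtain k where k: "S - R = k *\<^sub>R (Q - P)" using par[of "Q - P" "S - R"] PQ by auto
    hence k0: "k \<noteq> 0" using RS by auto
    have "\<And>Y. crs (Y - R) (S - R) = k * crs (Y - P) (Q - P)"
    proof -
      fix Y
      have "crs (X - R) (Q - P) = 0" using h2 k k0 by (simp add: crs_scale)
      hence "crs (R - P) (Q - P) = 0" using h1
        by (metis crs_sub diff_diff_eq2 diff_zero eq_iff_diff_eq_0 diff_add_cancel)
      thus "crs (Y - R) (S - R) = k * crs (Y - P) (Q - P)"
      proof -
        have "crs (Y - R) (Q - P) = crs (Y - P) (Q - P) - crs (R - P) (Q - P)"
          by (simp add: crs_def algebra_simps)
        thus ?thesis unfolding k crs_scale using \<open>crs (R - P) (Q - P) = 0\<close> by simp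
      qed
    qed
    hence "line_thru P Q = line_thru R S" using line_char[OF PQ] line_char[OF RS] k0 by auto
    thus False using ne by simp
  qed
qed


definition fc :: "real^2 \<Rightarrow> real^2 \<Rightarrow> real^2 \<Rightarrow> real" where
  "fc A B P = (P - midpoint A B) \<bullet> (B - A)"
definition gc :: "real^2 \<Rightarrow> real^2 \<Rightarrow> real^2 \<Rightarrow> real" where
  "gc A B P = (P - midpoint A B) \<bullet> rot90 (B - A)"

lemma fc_c: "fc A B P = (P$1 - (A$1+B$1)/2) * (B$1-A$1) + (P$2 - (A$2+B$2)/2) * (B$2-A$2)"
  by (simp add: fc_def inner2 midpoint_def)
lemma gc_c: "gc A B P = (P$1 - (A$1+B$1)/2) * (-(B$2-A$2)) + (P$2 - (A$2+B$2)/2) * (B$1-A$1)"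
  by (simp add: gc_def inner2 midpoint_def rot90_def)

lemma trans_crs:
  "(fc A B P - fc A B Q)  *  (gc A B R - gc A B S) - (gc A B P - gc A B Q)  *  (fc A B R - fc A B S)
   = ((B$1-A$1) * (B$1-A$1) + (B$2-A$2) * (B$2-A$2))  *  crs (P - Q) (R - S)"
  unfolding fc_c gc_c crs_def by simp algebra

lemma refl_c:
  assumes "v$1 * v$1+v$2 * v$2 \<noteq> 0"
  obtains k where "k  *  (v$1 * v$1+v$2 * v$2) = (X$1-P$1) * v$1 + (X$2-P$2) * v$2"
    "(reflect_line P v X)$1 = 2 * (P$1+k * v$1) - X$1" "(reflect_line P v X)$2 = 2 * (P$2 + k * v$2) - X$2"
proof -
  define k where "k = ((X - P) \<bullet> v) / (v \<bullet> v)"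
  have "k  *  (v$1 * v$1+v$2 * v$2) = (X$1-P$1) * v$1 + (X$2-P$2) * v$2"
    unfolding k_def inner2 using assms by simp
  moreover have "(reflect_line P v X)$1 = 2 * (P$1+k * v$1) - X$1" "(reflect_line P v X)$2 = 2 * (P$2 + k * v$2) - X$2"
    unfolding reflect_line_def k_def by simp_all
  ultimately show ?thesis using that by blast
qed

lemma L_ne:
  fixes A B :: "real^2"
  assumes "A \<noteq> B"
  shows "(B$1-A$1) * (B$1-A$1) + (B$2-A$2) * (B$2-A$2) \<noteq> 0"
proof
  assume "(B$1-A$1) * (B$1-A$1) + (B$2-A$2) * (B$2-A$2) = 0"
  hence "B$1-A$1 = 0" "B$2-A$2 = 0" using sum_squares_eq_zero_iff by blast+
  thus False using assms by (simp add: vec2_eq)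
qed

lemma refl_a:
  assumes "A \<noteq> B"
  shows "fc A B (reflect_a A B X) = fc A B X" "gc A B (reflect_a A B X) = - gc A B X"
proof -
  have L: "(B-A)$1 * (B-A)$1+(B-A)$2 * (B-A)$2 \<noteq> 0" using L_ne[OF assms] by simp
  obtain k where k: "k  *  ((B-A)$1 * (B-A)$1+(B-A)$2 * (B-A)$2) = (X$1-A$1) * (B-A)$1 + (X$2-A$2) * (B-A)$2"
    "(reflect_line A (B-A) X)$1 = 2 * (A$1+k * (B-A)$1) - X$1" "(reflect_line A (B-A) X)$2 = 2 * (A$2 + k * (B-A)$2) - X$2"
    using refl_c[OF L] by blast
  have k1: "k  *  ((B$1-A$1) * (B$1-A$1)+(B$2-A$2) * (B$2-A$2)) = (X$1-A$1) * (B$1-A$1) + (X$2-A$2) * (B$2-A$2)"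
    using k(1) by simp
  show "fc A B (reflect_a A B X) = fc A B X" unfolding reflect_a_def fc_c k(2,3)
    using k1 by simp algebra
  show "gc A B (reflect_a A B X) = - gc A B X" unfolding reflect_a_def gc_c k(2,3)
    by (simp add: field_simps)
qed

lemma refl_b:
  assumes "A \<noteq> B"
  shows "fc A B (reflect_b A B X) = - fc A B X" "gc A B (reflect_b A B X) = gc A B X"
proof -
  let ?v = "rot90 (B - A)"
  let ?M = "midpoint A B"
  have v: "?v$1 = -(B$2-A$2)" "?v$2 = B$1-A$1" by (simp_all add: rot90_def)
  have M: "?M$1 = (A$1+B$1)/2" "?M$2 = (A$2+B$2)/2" by (simp_all add: midpoint_def)
  have L: "?v$1 * ?v$1+?v$2 * ?v$2 \<noteq> 0" using L_ne[OF assms] unfolding v by (simp add: algebra_simps)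
  obtain k where k: "k  *  (?v$1 * ?v$1+?v$2 * ?v$2) = (X$1-?M$1) * ?v$1 + (X$2-?M$2) * ?v$2"
    "(reflect_line ?M ?v X)$1 = 2 * (?M$1+k * ?v$1) - X$1" "(reflect_line ?M ?v X)$2 = 2 * (?M$2 + k * ?v$2) - X$2"
    using refl_c[OF L] by blast
  note k' = k[unfolded v M]
  show "fc A B (reflect_b A B X) = - fc A B X" unfolding reflect_b_def fc_c k'(2,3)
    by (simp add: field_simps)
  show "gc A B (reflect_b A B X) = gc A B X" unfolding reflect_b_def gc_c k'(2,3)
    using k'(1) by simp algebra
qed


lemma tr0:
  assumes "A \<noteq> B"
  shows "crs (P - Q) (R - S) = 0 \<longleftrightarrow>
    (fc A B P - fc A B Q) * (gc A B R - gc A B S) - (gc A B P - gc A B Q) * (fc A B R - fc A B S) = 0"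
  using trans_crs[of A B P Q R S] L_ne[OF assms] by (metis mult_eq_0_iff)

lemma crs_col:
  assumes "crs (X - Y) (Z - Y) = 0"
  shows "collinear {X, Y, Z}"
proof -
  have "collinear {0, X - Y, Z - Y}"
  proof (cases "X - Y = 0")
    case True thus ?thesis by (simp add: collinear_lemma)
  next
    case False
    have "crs (Z - Y) (X - Y) = 0" using assms by (simp add: crs_def algebra_simps)
    hence "Z - Y = ((Z - Y) \<bullet> (X - Y) / ((X - Y) \<bullet> (X - Y))) *\<^sub>R (X - Y)" using par False by blast
    thus ?thesis unfolding collinear_lemma by blast
  qed
  thus ?thesis by (subst collinear_3) simp_all
qed

theorem mainTheorem1:
  fixes A B C D X Y Z :: "real^2"
  assumes "A \<noteq> B"
    and "D \<in> conic_union A B C"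
    and "is_intersection X C D (reflect_b A B C) (reflect_b A B D)"
    and "is_intersection Y C (reflect_a A B D) (reflect_a A B C) (reflect_b A B C)"
    and "is_intersection Z (reflect_a A B C) D (reflect_a A B D) (reflect_b A B D)"
  shows "collinear {X, Y, Z}"
proof -
  note AB = assms(1)
  note rr = refl_a[OF AB] refl_b[OF AB]
  note iX = inter[OF assms(3)] and iY = inter[OF assms(4)] and iZ = inter[OF assms(5)]
  note tr = tr0[OF AB]
  have X0: "(fc A B D - fc A B C) * (gc A B D - gc A B C) - (gc A B D - gc A B C) * (- fc A B D - - fc A B C) \<noteq> 0"
    using iX(1) tr[of D C "reflect_b A B D" "reflect_b A B C"] rr by simp
  have X1: "(fc A B X - fc A B C) * (gc A B D - gc A B C) - (gc A B X - gc A B C) * (fc A B D - fc A B C) = 0"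
    using iX(2) tr[of X C D C] by simp
  have X2: "(fc A B X - - fc A B C) * (gc A B D - gc A B C) - (gc A B X - gc A B C) * (- fc A B D - - fc A B C) = 0"
    using iX(3) tr[of X "reflect_b A B C" "reflect_b A B D" "reflect_b A B C"] rr by simp
  have Y0: "(fc A B D - fc A B C) * (gc A B C - - gc A B C) - (- gc A B D - gc A B C) * (- fc A B C - fc A B C) \<noteq> 0"
    using iY(1) tr[of "reflect_a A B D" C "reflect_b A B C" "reflect_a A B C"] rr by simp
  have Y1: "(fc A B Y - fc A B C) * (- gc A B D - gc A B C) - (gc A B Y - gc A B C) * (fc A B D - fc A B C) = 0"
    using iY(2) tr[of Y C "reflect_a A B D" C] rr by simp
  have Y2: "(fc A B Y - fc A B C) * (gc A B C - - gc A B C) - (gc A B Y - - gc A B C) * (- fc A B C - fc A B C) = 0"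
    using iY(3) tr[of Y "reflect_a A B C" "reflect_b A B C" "reflect_a A B C"] rr by simp
  have Z0: "(fc A B D - fc A B C) * (gc A B D - - gc A B D) - (gc A B D - - gc A B C) * (- fc A B D - fc A B D) \<noteq> 0"
    using iZ(1) tr[of D "reflect_a A B C" "reflect_b A B D" "reflect_a A B D"] rr by simp
  have Z1: "(fc A B Z - fc A B C) * (gc A B D - - gc A B C) - (gc A B Z - - gc A B C) * (fc A B D - fc A B C) = 0"
    using iZ(2) tr[of Z "reflect_a A B C" D "reflect_a A B C"] rr by simp
  have Z2: "(fc A B Z - fc A B D) * (gc A B D - - gc A B D) - (gc A B Z - - gc A B D) * (- fc A B D - fc A B D) = 0"
    using iZ(3) tr[of Z "reflect_a A B D" "reflect_b A B D" "reflect_a A B D"] rr by simp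
  have "(fc A B X - fc A B Y) * (gc A B Z - gc A B Y) - (gc A B X - gc A B Y) * (fc A B Z - fc A B Y) = 0"
    apply (rule core[where p="fc A B C" and q="gc A B C" and r="fc A B D" and s="gc A B D"])
    subgoal using X0 by (simp add: algebra_simps)
    subgoal using X1 by (simp add: algebra_simps)
    subgoal using X2 by (simp add: algebra_simps)
    subgoal using Y0 by (simp add: algebra_simps)
    subgoal using Y1 by (simp add: algebra_simps)
    subgoal using Y2 by (simp add: algebra_simps)
    subgoal using Z0 by (simp add: algebra_simps)
    subgoal using Z1 by (simp add: algebra_simps)
    subgoal using Z2 by (simp add: algebra_simps)
    done
  hence "crs (X - Y) (Z - Y) = 0" using tr[of X Y Z Y] by simp
  thus ?thesis by (rule crs_col)
qed

end
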